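(* For $n\ge 1$, let $\Delta_n$ be the $n$-dimensional simplex and $C^*_n$ the $n$-dimensional cross-polytope. Then $$\Theta(\Psi(\Delta_n))=[n+1]!\qquad\text{and}\qquad \Theta(\Psi(C^*_n))=[2]^n\cdot[n]!.$$
   Context: For a polytope $V$, $\Psi(V)$ denotes the $\mathbf{a}\mathbf{b}$-index of its face lattice (all faces, including the empty face and $V$ itself, ordered by inclusion; a graded poset of rank $\dim V+1$). The $\mathbf{a}\mathbf{b}$-index of a graded poset $P$ of rank $n+1$ with minimum $\hat 0$, maximum $\hat 1$ and rank function $\rho$ is $\Psi(P)=\sum_{S\subseteq\{1,\dots,n\}} f_S\, v_S$, where for $S=\{s_1<\cdots<s_k\}$, $f_S$ is the number of chains $\hat0<x_1<\cdots<x_k<\hat1$ with $\rho(x_i)=s_i$, and $v_S=v_1\cdots v_n$ with $v_i=\mathbf{b}$ if $i\in S$ and $v_i=\mathbf{a}-\mathbf{b}$ if $i\notin S$; here $\mathbf{a},\mathbf{b}$ are non-commuting variables. The Major MacMahon map $\Theta:\mathbb{Z}\langle\mathbf{a},\mathbf{b}\rangle\to\mathbb{Z}[q]$ is the linear map with $\Theta(u_1\cdots u_n)=\prod_{i:\,u_i=\mathbf{b}}q^i$ on monomials. $[m]=1+q+\cdots+q^{m-1}$ and $[m]!=[m][m-1]\cdots[1]$. *)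

theory Defs
  imports "HOL-Analysis.Analysis" "HOL-Computational_Algebra.Polynomial"
begin

text \<open>An element of Z<a,b> is represented by its coefficient function on words.
  A word is a bool list; False stands for the letter a, True for the letter b.\<close>

type_synonym ncpoly = "bool list \<Rightarrow> int"

definition nc_one :: ncpoly where
  "nc_one = (\<lambda>w. if w = [] then 1 else 0)"

definition nc_a :: ncpoly where
  "nc_a = (\<lambda>w. if w = [False] then 1 else 0)"

definition nc_b :: ncpoly where
  "nc_b = (\<lambda>w. if w = [True] then 1 else 0)"

definition nc_add :: "ncpoly \<Rightarrow> ncpoly \<Rightarrow> ncpoly" where
  "nc_add p r = (\<lambda>w. p w + r w)"

definition nc_sub :: "ncpoly \<Rightarrow> ncpoly \<Rightarrow> ncpoly" where
  "nc_sub p r = (\<lambda>w. p w - r w)"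

definition nc_smult :: "int \<Rightarrow> ncpoly \<Rightarrow> ncpoly" where
  "nc_smult c p = (\<lambda>w. c * p w)"

definition nc_mul :: "ncpoly \<Rightarrow> ncpoly \<Rightarrow> ncpoly" where
  "nc_mul p r = (\<lambda>w. \<Sum>k\<le>length w. p (take k w) * r (drop k w))"

definition flag_count :: "'a set set \<Rightarrow> ('a set \<Rightarrow> nat) \<Rightarrow> nat set \<Rightarrow> nat" where
  "flag_count P \<rho> S = card {xs. length xs = card S \<and>
      (\<forall>i<length xs. xs ! i \<in> P \<and> \<rho> (xs ! i) = sorted_list_of_set S ! i) \<and>
      (\<forall>i. Suc i < length xs \<longrightarrow> xs ! i \<subset> xs ! Suc i)}"

definition v_mono :: "nat \<Rightarrow> nat set \<Rightarrow> ncpoly" where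
  "v_mono n S = foldr nc_mul
     (map (\<lambda>i. if i \<in> S then nc_b else nc_sub nc_a nc_b) [1..<Suc n]) nc_one"

text \<open>ab-index of a graded poset P of rank n+1 with rank function rho.\<close>
definition ab_index :: "nat \<Rightarrow> 'a set set \<Rightarrow> ('a set \<Rightarrow> nat) \<Rightarrow> ncpoly" where
  "ab_index n P \<rho> = (\<lambda>w. \<Sum>S\<in>Pow {1..n}. int (flag_count P \<rho> S) * v_mono n S w)"

definition Theta :: "ncpoly \<Rightarrow> int poly" where
  "Theta p = (\<Sum>w\<in>{w. p w \<noteq> 0}.
      smult (p w) (monom 1 (\<Sum>i<length w. if w ! i then Suc i else 0)))"

definition qint :: "nat \<Rightarrow> int poly" where
  "qint m = (\<Sum>i<m. monom 1 i)"

definition qfact :: "nat \<Rightarrow> int poly" where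
  "qfact m = (\<Prod>i\<in>{1..m}. qint i)"

text \<open>Face lattice: all faces (including the empty face and V itself), ordered by
  inclusion; rank of a face F is dim F + 1.\<close>
definition face_lattice :: "'a::euclidean_space set \<Rightarrow> 'a set set" where
  "face_lattice V = {F. F face_of V}"

definition face_rank :: "'a::euclidean_space set \<Rightarrow> nat" where
  "face_rank F = nat (aff_dim F + 1)"

definition Psi :: "'a::euclidean_space set \<Rightarrow> ncpoly" where
  "Psi V = ab_index (nat (aff_dim V)) (face_lattice V) face_rank"

text \<open>The n-simplex in R^n (n = CARD('n)): convex hull of 0 and the unit vectors.\<close>
definition simplex_poly :: "(real ^ 'n) set" where
  "simplex_poly = convex hull (insert 0 (range (\<lambda>i. axis i 1)))"

definition cross_polytope :: "(real ^ 'n) set" where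
  "cross_polytope = convex hull (range (\<lambda>i. axis i 1) \<union> range (\<lambda>i. axis i (-1)))"

end

theory Submission
  imports Defs
begin


lemma chain_trans:
  assumes "\<forall>i. Suc i < length xs \<longrightarrow> xs ! i \<subset> xs ! Suc i" "i < k" "k < length xs"
  shows "xs ! i \<subset> xs ! k"
  using assms(2,3)
proof (induction k)
  case 0 then show ?case by simp
next
  case (Suc k)
  show ?case
  proof (cases "i = k")
    case True then show ?thesis using assms(1) Suc by auto
  next
    case False
    then have "xs ! i \<subset> xs ! k" using Suc by auto
    also have "xs ! k \<subset> xs ! Suc k" using assms(1) Suc by auto
    finally show ?thesis .
  qed
qed

lemma flag_count_empty: "flag_count P \<rho> {} = 1"
proof -
  have "{xs. length xs = card ({}::nat set) \<and>
      (\<forall>i<length xs. xs ! i \<in> P \<and> \<rho> (xs ! i) = sorted_list_of_set {} ! i) \<and>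
      (\<forall>i. Suc i < length xs \<longrightarrow> xs ! i \<subset> xs ! Suc i)} = {[]}" by auto
  then show ?thesis unfolding flag_count_def by simp
qed

lemma flag_count_transfer:
  assumes A1: "\<And>x. x \<in> Q \<Longrightarrow> f x \<in> P \<and> \<rho> (f x) = \<rho>' x"
    and A2: "\<And>y. y \<in> P \<Longrightarrow> \<rho> y \<in> S \<Longrightarrow> y \<in> f ` Q"
    and A3: "\<And>c d. c \<in> Q \<Longrightarrow> d \<in> Q \<Longrightarrow> f c \<subseteq> f d \<longleftrightarrow> c \<subseteq> d"
    and fin: "finite S"
  shows "flag_count P \<rho> S = flag_count Q \<rho>' S"
proof -
  let ?l = "sorted_list_of_set S"
  define CP where "CP = {xs. length xs = card S \<and>
      (\<forall>i<length xs. xs ! i \<in> P \<and> \<rho> (xs ! i) = ?l ! i) \<and>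
      (\<forall>i. Suc i < length xs \<longrightarrow> xs ! i \<subset> xs ! Suc i)}"
  define CQ where "CQ = {xs. length xs = card S \<and>
      (\<forall>i<length xs. xs ! i \<in> Q \<and> \<rho>' (xs ! i) = ?l ! i) \<and>
      (\<forall>i. Suc i < length xs \<longrightarrow> xs ! i \<subset> xs ! Suc i)}"
  have inj: "inj_on f Q" by (rule inj_onI) (metis A3 subset_antisym order_refl)
  have strict: "\<And>c d. c \<in> Q \<Longrightarrow> d \<in> Q \<Longrightarrow> f c \<subset> f d \<longleftrightarrow> c \<subset> d"
    using A3 unfolding psubset_eq by blast
  have lS: "\<And>i. i < card S \<Longrightarrow> ?l ! i \<in> S"
    using fin by (metis length_sorted_list_of_set nth_mem set_sorted_list_of_set)
  have "CP = map f ` CQ"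
  proof
    show "map f ` CQ \<subseteq> CP"
    proof
      fix ys assume "ys \<in> map f ` CQ"
      then obtain xs where xs: "xs \<in> CQ" "ys = map f xs" by auto
      have c: "length xs = card S" "\<And>i. i<length xs \<Longrightarrow> xs!i \<in> Q \<and> \<rho>'(xs!i) = ?l!i"
        "\<And>i. Suc i<length xs \<Longrightarrow> xs!i \<subset> xs!Suc i" using xs(1) unfolding CQ_def by auto
      show "ys \<in> CP" unfolding CP_def xs(2)
      proof (intro CollectI conjI allI impI)
        show "length (map f xs) = card S" using c by simp
      next
        fix i assume "i < length (map f xs)"
        then show "map f xs ! i \<in> P" "\<rho> (map f xs ! i) = ?l ! i" using c(2)[of i] A1[of "xs!i"] by auto
      next
        fix i assume i: "Suc i < length (map f xs)"
        then have "xs!i \<subset> xs!Suc i" "xs!i \<in> Q" "xs ! Suc i \<in> Q" using c by auto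
        then show "map f xs ! i \<subset> map f xs ! Suc i" using i strict by simp
      qed
    qed
  next
    show "CP \<subseteq> map f ` CQ"
    proof
      fix ys assume ys: "ys \<in> CP"
      define xs where "xs = map (inv_into Q f) ys"
      have mem: "\<And>i. i < length ys \<Longrightarrow> ys ! i \<in> f ` Q"
        using ys lS A2 unfolding CP_def by auto
      have fx: "map f xs = ys" unfolding xs_def
        by (rule nth_equalityI) (auto simp: mem f_inv_into_f)
      have xQ: "\<And>i. i < length xs \<Longrightarrow> xs ! i \<in> Q"
        unfolding xs_def using mem by (auto intro: inv_into_into)
      have "xs \<in> CQ"
        unfolding CQ_def
      proof (intro CollectI conjI allI impI)
        show "length xs = card S" using ys unfolding xs_def CP_def by auto
      next
        fix i assume i: "i < length xs"
        show "xs ! i \<in> Q" using xQ i .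
        have ysc: "\<rho> (ys ! i) = ?l ! i" using ys i fx unfolding CP_def by auto
        have "ys ! i = f (xs ! i)" using fx i by auto
        then show "\<rho>' (xs ! i) = ?l ! i" using A1[OF xQ[OF i]] ysc by simp
      next
        fix i assume i: "Suc i < length xs"
        have ysc: "ys ! i \<subset> ys ! Suc i" using ys i fx unfolding CP_def by auto
        have "ys ! i = f (xs ! i)" "ys ! Suc i = f (xs ! Suc i)" using fx i by auto
        then show "xs ! i \<subset> xs ! Suc i" using strict[OF xQ xQ] i ysc by simp
      qed
      then show "ys \<in> map f ` CQ" using fx by blast
    qed
  qed
  moreover have "inj_on (map f) CQ"
  proof (rule inj_onI)
    fix xs ys assume "xs \<in> CQ" "ys \<in> CQ" "map f xs = map f ys"
    moreover have "set xs \<subseteq> Q" "set ys \<subseteq> Q" using \<open>xs \<in> CQ\<close> \<open>ys \<in> CQ\<close>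
      unfolding CQ_def by (auto simp: in_set_conv_nth)
    ultimately show "xs = ys" using inj_on_map_eq_map[of f xs ys] inj_on_subset[OF inj]
      by (metis Un_subset_iff)
  qed
  ultimately have "card CP = card CQ" by (simp add: card_image)
  then show ?thesis unfolding flag_count_def CP_def CQ_def .
qed



definition chs :: "'a set set \<Rightarrow> ('a set \<Rightarrow> nat) \<Rightarrow> nat set \<Rightarrow> 'a set list set" where
  "chs P \<rho> S = {xs. length xs = card S \<and>
      (\<forall>i<length xs. xs ! i \<in> P \<and> \<rho> (xs ! i) = sorted_list_of_set S ! i) \<and>
      (\<forall>i. Suc i < length xs \<longrightarrow> xs ! i \<subset> xs ! Suc i)}"

lemma flag_count_chs: "flag_count P \<rho> S = card (chs P \<rho> S)"
  unfolding flag_count_def chs_def ..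

lemma finite_chs: "finite P \<Longrightarrow> finite (chs P \<rho> S)"
  by (rule finite_subset[OF _ finite_lists_length_eq[of P "card S"]])
     (auto simp: chs_def in_set_conv_nth)

lemma sorted_insert_max:
  assumes "finite T" "\<forall>t\<in>T. t < j"
  shows "sorted_list_of_set (insert j T) = sorted_list_of_set T @ [j]"
proof -
  have jT: "j \<notin> T" using assms by auto
  have "sorted_wrt (<) (sorted_list_of_set T @ [j]) \<and> set (sorted_list_of_set T @ [j]) = insert j T
     \<and> length (sorted_list_of_set T @ [j]) = card (insert j T)"
    using assms jT by (auto simp: sorted_wrt_append)
  then show ?thesis using sorted_list_of_set_unique[of "insert j T" "sorted_list_of_set T @ [j]"] assms(1) by blast
qed

lemma flag_count_insert_max:
  assumes finQ: "finite Q" and finT: "finite T" and lt: "\<forall>t\<in>T. t < j"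
  shows "flag_count Q \<rho> (insert j T) = (\<Sum>x\<in>{x\<in>Q. \<rho> x = j}. flag_count {y\<in>Q. y \<subset> x} \<rho> T)"
proof -
  let ?L = "sorted_list_of_set T"
  let ?k = "card T"
  have jT: "j \<notin> T" using lt by auto
  have sl: "sorted_list_of_set (insert j T) = ?L @ [j]" using sorted_insert_max[OF finT lt] .
  have cI: "card (insert j T) = Suc ?k" using finT jT by simp
  have lenL: "length ?L = ?k" by simp
  define X where "X = {x\<in>Q. \<rho> x = j}"
  have eq: "chs Q \<rho> (insert j T) = (\<lambda>(x,ys). ys @ [x]) ` (Sigma X (\<lambda>x. chs {y\<in>Q. y \<subset> x} \<rho> T))"
  proof
    show "chs Q \<rho> (insert j T) \<subseteq> (\<lambda>(x,ys). ys @ [x]) ` (Sigma X (\<lambda>x. chs {y\<in>Q. y \<subset> x} \<rho> T))"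
    proof
      fix zs assume zs: "zs \<in> chs Q \<rho> (insert j T)"
      have len: "length zs = Suc ?k" using zs cI by (simp add: chs_def)
      have z1: "\<And>i. i < Suc ?k \<Longrightarrow> zs ! i \<in> Q \<and> \<rho> (zs ! i) = (?L @ [j]) ! i"
        using zs len sl by (auto simp: chs_def)
      have z2: "\<forall>i. Suc i < length zs \<longrightarrow> zs ! i \<subset> zs ! Suc i" using zs by (simp add: chs_def)
      define ys where "ys = take ?k zs"
      define x where "x = zs ! ?k"
      have zsy: "zs = ys @ [x]" unfolding ys_def x_def using len
        by (metis id_take_nth_drop lessI append_Nil2 drop_all le_refl Suc_n_not_le_n take_all)
      have xX: "x \<in> X" using z1[of ?k] lenL unfolding X_def x_def by (simp add: nth_append)
      have "ys \<in> chs {y\<in>Q. y \<subset> x} \<rho> T"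
        unfolding chs_def
      proof (intro CollectI conjI allI impI)
        show "length ys = card T" using len ys_def by simp
      next
        fix i assume i: "i < length ys"
        then have ik: "i < ?k" using len ys_def by simp
        have "ys ! i = zs ! i" using ik ys_def by simp
        moreover have "zs ! i \<subset> x" unfolding x_def using chain_trans[OF z2 ik] len by simp
        ultimately show "ys ! i \<in> Q" "ys ! i \<subset> x" using z1[of i] ik by simp_all
        show "\<rho> (ys ! i) = ?L ! i" using z1[of i] ik \<open>ys ! i = zs ! i\<close> lenL by (simp add: nth_append)
      next
        fix i assume i: "Suc i < length ys"
        then show "ys ! i \<subset> ys ! Suc i" using z2 len ys_def by simp
      qed
      then show "zs \<in> (\<lambda>(x,ys). ys @ [x]) ` (Sigma X (\<lambda>x. chs {y\<in>Q. y \<subset> x} \<rho> T))"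
        using xX zsy by force
    qed
  next
    show "(\<lambda>(x,ys). ys @ [x]) ` (Sigma X (\<lambda>x. chs {y\<in>Q. y \<subset> x} \<rho> T)) \<subseteq> chs Q \<rho> (insert j T)"
    proof clarify
      fix x ys assume xX: "x \<in> X" and ys: "ys \<in> chs {y\<in>Q. y \<subset> x} \<rho> T"
      have len: "length ys = ?k" using ys by (simp add: chs_def)
      have y1: "\<And>i. i < ?k \<Longrightarrow> ys ! i \<in> Q \<and> ys ! i \<subset> x \<and> \<rho> (ys ! i) = ?L ! i"
        using ys len by (auto simp: chs_def)
      have y2: "\<And>i. Suc i < ?k \<Longrightarrow> ys ! i \<subset> ys ! Suc i" using ys len by (simp add: chs_def)
      show "ys @ [x] \<in> chs Q \<rho> (insert j T)"
        unfolding chs_def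
      proof (intro CollectI conjI allI impI)
        show "length (ys @ [x]) = card (insert j T)" using len cI by simp
      next
        fix i assume i: "i < length (ys @ [x])"
        have "(ys @ [x]) ! i \<in> Q \<and> \<rho> ((ys @ [x]) ! i) = sorted_list_of_set (insert j T) ! i"
        proof (cases "i < ?k")
          case True then show ?thesis using y1[of i] len lenL sl by (simp add: nth_append)
        next
          case False then have "i = ?k" using i len by simp
          then show ?thesis using xX len lenL sl unfolding X_def by (simp add: nth_append)
        qed
        then show "(ys @ [x]) ! i \<in> Q" "\<rho> ((ys @ [x]) ! i) = sorted_list_of_set (insert j T) ! i" by simp_all
      next
        fix i assume i: "Suc i < length (ys @ [x])"
        show "(ys @ [x]) ! i \<subset> (ys @ [x]) ! Suc i"
        proof (cases "Suc i < ?k")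
          case True then show ?thesis using y2[of i] len by (simp add: nth_append)
        next
          case False then have "Suc i = ?k" using i len by simp
          then show ?thesis using y1[of i] len by (simp add: nth_append)
        qed
      qed
    qed
  qed
  have inj: "inj_on (\<lambda>(x,ys). ys @ [x]) (Sigma X (\<lambda>x. chs {y\<in>Q. y \<subset> x} \<rho> T))"
    by (rule inj_onI) auto
  have finX: "finite X" using finQ unfolding X_def by simp
  have "flag_count Q \<rho> (insert j T) = card (Sigma X (\<lambda>x. chs {y\<in>Q. y \<subset> x} \<rho> T))"
    unfolding flag_count_chs eq using card_image[OF inj] by simp
  also have "\<dots> = (\<Sum>x\<in>X. card (chs {y\<in>Q. y \<subset> x} \<rho> T))"
    using finX finQ by (simp add: finite_chs)
  finally show ?thesis unfolding X_def flag_count_chs .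
qed

lemma flag_count_restrict:
  assumes "finite S"
  shows "flag_count P \<rho> S = flag_count {p\<in>P. \<rho> p \<in> S} \<rho> S"
proof -
  have lS: "\<And>i. i < card S \<Longrightarrow> sorted_list_of_set S ! i \<in> S"
    using assms by (metis length_sorted_list_of_set nth_mem set_sorted_list_of_set)
  have "chs P \<rho> S = chs {p\<in>P. \<rho> p \<in> S} \<rho> S"
    unfolding chs_def using lS by (auto simp del: sorted_list_of_set.length_sorted_key_list_of_set)
  then show ?thesis by (simp add: flag_count_chs)
qed



definition wt :: "bool list \<Rightarrow> nat" where
  "wt w = (\<Sum>i<length w. if w ! i then Suc i else 0)"

definition W :: "nat \<Rightarrow> nat set \<Rightarrow> int poly" where
  "W n S = (\<Prod>i\<in>{1..n}. if i \<in> S then monom 1 i else 1 - monom 1 i)"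

lemma Theta_superset:
  assumes "finite X" "{w. p w \<noteq> 0} \<subseteq> X"
  shows "Theta p = (\<Sum>w\<in>X. smult (p w) (monom 1 (wt w)))"
  unfolding Theta_def wt_def
  by (rule sum.mono_neutral_left) (use assms in auto)

lemma foldr_letters:
  assumes "\<forall>l\<in>set ls. \<forall>w. length w \<noteq> 1 \<longrightarrow> l w = 0"
  shows "foldr nc_mul ls nc_one w =
    (if length w = length ls then \<Prod>i<length ls. (ls ! i) [w ! i] else 0)"
  using assms
proof (induction ls arbitrary: w)
  case Nil
  then show ?case by (simp add: nc_one_def)
next
  case (Cons l ls)
  have IH: "\<And>w. foldr nc_mul ls nc_one w =
    (if length w = length ls then \<Prod>i<length ls. (ls ! i) [w ! i] else 0)" using Cons by simp
  have l0: "\<And>w. length w \<noteq> 1 \<Longrightarrow> l w = 0" using Cons.prems by simp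
  show ?case
  proof (cases w)
    case Nil
    then show ?thesis by (simp add: nc_mul_def l0)
  next
    case (Cons b w')
    have "foldr nc_mul (l # ls) nc_one w = (\<Sum>k\<le>length w. l (take k w) * foldr nc_mul ls nc_one (drop k w))"
      by (simp add: nc_mul_def)
    also have "\<dots> = (\<Sum>k\<in>{1}. l (take k w) * foldr nc_mul ls nc_one (drop k w))"
    proof (rule sum.mono_neutral_right)
      show "finite {..length w}" by simp
      show "{1} \<subseteq> {..length w}" using Cons by simp
      show "\<forall>k\<in>{..length w} - {1}. l (take k w) * foldr nc_mul ls nc_one (drop k w) = 0"
      proof
        fix k assume k: "k \<in> {..length w} - {1}"
        then have "length (take k w) \<noteq> 1" by auto
        then show "l (take k w) * foldr nc_mul ls nc_one (drop k w) = 0" using l0 by simp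
      qed
    qed
    also have "\<dots> = l [b] * foldr nc_mul ls nc_one w'" using Cons by simp
    also have "\<dots> = (if length w = length (l # ls) then \<Prod>i<length (l#ls). ((l#ls) ! i) [w ! i] else 0)"
      using Cons by (simp add: IH prod.lessThan_Suc_shift del: prod.lessThan_Suc)
    finally show ?thesis .
  qed
qed

definition lt :: "nat set \<Rightarrow> nat \<Rightarrow> bool \<Rightarrow> int" where
  "lt S j b = (if j \<in> S then (if b then 1 else 0) else (if b then -1 else 1))"

lemma v_mono_eq:
  "v_mono n S w = (if length w = n then \<Prod>i<n. lt S (Suc i) (w ! i) else 0)"
proof -
  let ?ls = "map (\<lambda>i. if i \<in> S then nc_b else nc_sub nc_a nc_b) [1..<Suc n]"
  have "\<forall>l\<in>set ?ls. \<forall>w. length w \<noteq> 1 \<longrightarrow> l w = 0"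
    by (auto simp: nc_b_def nc_sub_def nc_a_def)
  note F = foldr_letters[OF this, of w]
  have "\<And>i. i < n \<Longrightarrow> (?ls ! i) [w ! i] = lt S (Suc i) (w ! i)"
    by (auto simp: nth_map_upt nc_b_def nc_sub_def nc_a_def lt_def simp del: upt_Suc)
  moreover have len: "length ?ls = n" by simp
  ultimately show ?thesis unfolding v_mono_def F len by (auto intro: prod.cong)
qed

lemma sum_lists_prod:
  fixes e :: "nat \<Rightarrow> bool \<Rightarrow> 'a::comm_semiring_1"
  shows "(\<Sum>w\<in>{w. length w = n}. \<Prod>i<n. e i (w ! i)) = (\<Prod>i<n. e i False + e i True)"
proof (induction n)
  case 0
  have "{w::bool list. length w = 0} = {[]}" by auto
  then show ?case by simp
next
  case (Suc n)
  have eq: "{w::bool list. length w = Suc n} = (\<lambda>(w,b). w @ [b]) ` ({w. length w = n} \<times> UNIV)"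
  proof
    show "{w::bool list. length w = Suc n} \<subseteq> (\<lambda>(w,b). w @ [b]) ` ({w. length w = n} \<times> UNIV)"
    proof
      fix w :: "bool list" assume "w \<in> {w. length w = Suc n}"
      then have "w = butlast w @ [last w]" "length (butlast w) = n"
        by (auto intro: append_butlast_last_id[symmetric])
      then show "w \<in> (\<lambda>(w,b). w @ [b]) ` ({w. length w = n} \<times> UNIV)"
        by (metis (mono_tags, lifting) SigmaI UNIV_I case_prod_conv image_eqI mem_Collect_eq)
    qed
  qed auto
  have inj: "inj_on (\<lambda>(w,b). w @ [b]) ({w::bool list. length w = n} \<times> UNIV)"
    by (rule inj_onI) auto
  have fin: "finite {w::bool list. length w = n}"
    using finite_lists_length_eq[of "UNIV::bool set" n] by simp
  have "(\<Sum>w\<in>{w. length w = Suc n}. \<Prod>i<Suc n. e i (w ! i))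
      = (\<Sum>(w,b)\<in>{w. length w = n} \<times> UNIV. \<Prod>i<Suc n. e i ((w @ [b]) ! i))"
    unfolding eq by (subst sum.reindex[OF inj]) (simp add: case_prod_unfold)
  also have "\<dots> = (\<Sum>w\<in>{w. length w = n}. \<Sum>b\<in>UNIV. (\<Prod>i<n. e i (w ! i)) * e n b)"
    unfolding sum.cartesian_product[symmetric]
    by (intro sum.cong refl) (auto simp: nth_append intro!: prod.cong)
  also have "\<dots> = (\<Sum>w\<in>{w. length w = n}. (\<Prod>i<n. e i (w ! i)) * (e n False + e n True))"
    by (simp add: UNIV_bool add.commute distrib_left)
  also have "\<dots> = (\<Prod>i<Suc n. e i False + e i True)"
    by (simp add: sum_distrib_right[symmetric] Suc)
  finally show ?case .
qed

lemma monom_prod: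
  "(\<Prod>i<(n::nat). monom (c i) (d i)) = monom (\<Prod>i<n. c i :: 'a::comm_semiring_1) (\<Sum>i<n. d i)"
  by (induction n) (auto simp: mult_monom monom_0 one_pCons)

lemma Theta_v_mono:
  "(\<Sum>w\<in>{w. length w = n}. smult (v_mono n S w) (monom 1 (wt w))) = W n S"
proof -
  have "(\<Sum>w\<in>{w. length w = n}. smult (v_mono n S w) (monom 1 (wt w)))
     = (\<Sum>w\<in>{w. length w = n}. \<Prod>i<n. monom (lt S (Suc i) (w ! i)) (if w ! i then Suc i else 0))"
    by (intro sum.cong refl) (auto simp: v_mono_eq monom_prod smult_monom wt_def)
  also have "\<dots> = (\<Prod>i<n. monom (lt S (Suc i) False) 0 + monom (lt S (Suc i) True) (Suc i))"
    by (rule sum_lists_prod[where e = "\<lambda>i b. monom (lt S (Suc i) b) (if b then Suc i else 0)", simplified])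
  also have "\<dots> = (\<Prod>i<n. if Suc i \<in> S then monom 1 (Suc i) else 1 - monom 1 (Suc i))"
    by (intro prod.cong refl) (auto simp: lt_def monom_0 one_pCons minus_monom[symmetric])
  also have "\<dots> = W n S"
    unfolding W_def
    by (rule prod.reindex_bij_witness[where i = "\<lambda>i. i - 1" and j = Suc]) auto
  finally show ?thesis .
qed

lemma Theta_ab_index:
  "Theta (ab_index n P \<rho>) = (\<Sum>S\<in>Pow {1..n}. of_nat (flag_count P \<rho> S) * W n S)"
proof -
  have fin: "finite {w::bool list. length w = n}"
    using finite_lists_length_eq[of "UNIV::bool set" n] by simp
  have supp: "{w. ab_index n P \<rho> w \<noteq> 0} \<subseteq> {w. length w = n}"
  proof
    fix w assume w: "w \<in> {w. ab_index n P \<rho> w \<noteq> 0}"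
    show "w \<in> {w. length w = n}"
    proof (rule ccontr)
      assume "w \<notin> {w. length w = n}"
      then have "ab_index n P \<rho> w = 0" by (simp add: ab_index_def v_mono_eq)
      then show False using w by simp
    qed
  qed
  have "Theta (ab_index n P \<rho>) = (\<Sum>w\<in>{w. length w = n}. smult (ab_index n P \<rho> w) (monom 1 (wt w)))"
    by (rule Theta_superset[OF fin supp])
  also have "\<dots> = (\<Sum>w\<in>{w. length w = n}. \<Sum>S\<in>Pow {1..n}. of_nat (flag_count P \<rho> S) * smult (v_mono n S w) (monom 1 (wt w)))"
    unfolding ab_index_def smult_sum
    by (intro sum.cong refl) (simp add: of_nat_poly mult.commute)
  also have "\<dots> = (\<Sum>S\<in>Pow {1..n}. of_nat (flag_count P \<rho> S) * (\<Sum>w\<in>{w. length w = n}. smult (v_mono n S w) (monom 1 (wt w))))"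
    by (subst sum.swap) (simp add: sum_distrib_left)
  also have "\<dots> = (\<Sum>S\<in>Pow {1..n}. of_nat (flag_count P \<rho> S) * W n S)"
    by (simp add: Theta_v_mono)
  finally show ?thesis .
qed



abbreviation qq :: "int poly" where "qq \<equiv> monom 1 1"

lemma monom_q: "monom 1 i = qq ^ i"
  by (simp add: monom_power)

definition PP :: "nat \<Rightarrow> nat \<Rightarrow> int poly" where
  "PP a b = (\<Prod>i\<in>{a..b}. 1 - qq ^ i)"

lemma qint_mult: "(1 - qq) * qint m = 1 - qq ^ m"
proof (induction m)
  case 0 then show ?case by (simp add: qint_def)
next
  case (Suc m)
  have "qint (Suc m) = qint m + monom 1 m" by (simp add: qint_def)
  then have "qint (Suc m) = qint m + qq ^ m" using monom_q[of m] by simp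
  then have "(1 - qq) * qint (Suc m) = (1 - qq) * qint m + (1 - qq) * qq ^ m"
    by (simp only: distrib_left)
  also have "\<dots> = (1 - qq ^ m) + (1 - qq) * qq ^ m" by (simp only: Suc.IH)
  also have "\<dots> = 1 - qq ^ Suc m" by (simp add: algebra_simps)
  finally show ?case .
qed

lemma qfact_mult: "qfact k * (1 - qq) ^ k = PP 1 k"
proof (induction k)
  case 0 then show ?case by (simp add: qfact_def PP_def)
next
  case (Suc k)
  have "qfact (Suc k) = qfact k * qint (Suc k)"
    by (simp add: qfact_def prod.nat_ivl_Suc' mult.commute)
  moreover have "PP 1 (Suc k) = PP 1 k * (1 - qq ^ Suc k)"
    by (simp add: PP_def prod.nat_ivl_Suc' mult.commute)
  ultimately have "qfact (Suc k) * (1 - qq) ^ Suc k = (qfact k * (1 - qq) ^ k) * ((1 - qq) * qint (Suc k))"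
    by (simp add: mult_ac)
  also have "\<dots> = PP 1 (Suc k)" using Suc qint_mult[of "Suc k"] \<open>PP 1 (Suc k) = _\<close> by simp
  finally show ?case .
qed

lemma PP_split: "j \<le> m \<Longrightarrow> PP 1 j * PP (Suc j) m = PP 1 m"
proof -
  assume jm: "j \<le> m"
  have "{1..m} = {1..j} \<union> {Suc j..m}" using jm by auto
  then show ?thesis unfolding PP_def
    by (simp add: prod.union_disjoint[symmetric] ivl_disj_int)
qed

lemma PP_Suc: "PP 1 (Suc m) = PP 1 m * (1 - qq ^ Suc m)"
  by (simp add: PP_def prod.nat_ivl_Suc' mult.commute)

lemma one_minus_q_nz: "(1 - qq) ^ k \<noteq> 0"
proof -
  have "coeff (1 - qq) 1 = -1" by (simp add: coeff_monom)
  then have "1 - qq \<noteq> 0" by (metis coeff_0 zero_neq_neg_one)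
  then show ?thesis by simp
qed

lemma cancel_q: "a * (1 - qq) ^ k = b * (1 - qq) ^ k \<Longrightarrow> a = b"
  using mult_right_cancel[OF one_minus_q_nz[of k]] by blast

lemma simplex_identity:
  assumes "k \<ge> 1"
  shows "(\<Sum>j<k. of_nat (k choose j) * qfact j * qq ^ j * PP (Suc j) (k - 1)) = qfact k"
proof -
  have "(\<Sum>j<k. of_nat (k choose j) * qfact j * qq ^ j * PP (Suc j) (k - 1)) * (1 - qq) ^ k
     = (\<Sum>j<k. of_nat (k choose j) * qq ^ j * (1 - qq) ^ (k - j)) * PP 1 (k - 1)"
    unfolding sum_distrib_right
  proof (intro sum.cong refl)
    fix j assume j: "j \<in> {..<k}"
    have e1: "(1 - qq) ^ k = (1 - qq) ^ j * (1 - qq) ^ (k - j)"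
      using j by (simp add: power_add[symmetric])
    have e2: "qfact j * (1 - qq) ^ j * PP (Suc j) (k - 1) = PP 1 (k - 1)"
      using j qfact_mult[of j] PP_split[of j "k - 1"] by simp
    have "of_nat (k choose j) * qfact j * qq ^ j * PP (Suc j) (k - 1) * (1 - qq) ^ k
       = of_nat (k choose j) * qq ^ j * (1 - qq) ^ (k - j) * (qfact j * (1 - qq) ^ j * PP (Suc j) (k - 1))"
      unfolding e1 by (simp only: mult_ac)
    then show "of_nat (k choose j) * qfact j * qq ^ j * PP (Suc j) (k - 1) * (1 - qq) ^ k
       = of_nat (k choose j) * qq ^ j * (1 - qq) ^ (k - j) * PP 1 (k - 1)"
      unfolding e2 .
  qed
  also have "(\<Sum>j<k. of_nat (k choose j) * qq ^ j * (1 - qq) ^ (k - j)) = 1 - qq ^ k"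
  proof -
    have "(qq + (1 - qq)) ^ k = (\<Sum>j\<le>k. of_nat (k choose j) * qq ^ j * (1 - qq) ^ (k - j))"
      by (rule binomial_ring)
    also have "\<dots> = (\<Sum>j<k. of_nat (k choose j) * qq ^ j * (1 - qq) ^ (k - j)) + qq ^ k"
      by (simp add: lessThan_Suc_atMost[symmetric])
    finally have "1 = (\<Sum>j<k. of_nat (k choose j) * qq ^ j * (1 - qq) ^ (k - j)) + qq ^ k" by simp
    then show ?thesis by (metis add_diff_cancel_right')
  qed
  also have "(1 - qq ^ k) * PP 1 (k - 1) = qfact k * (1 - qq) ^ k"
  proof -
    have "(1 - qq ^ k) * PP 1 (k - 1) = PP 1 (k - 1) * (1 - qq ^ Suc (k - 1))"
      using assms by (simp add: mult.commute)
    also have "\<dots> = PP 1 k" using PP_Suc[of "k - 1"] assms by simp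
    also have "\<dots> = qfact k * (1 - qq) ^ k" by (rule qfact_mult[symmetric])
    finally show ?thesis .
  qed
  finally show ?thesis by (rule cancel_q)
qed

lemma cross_identity:
  "(\<Sum>j\<le>n. of_nat (n choose j) * 2 ^ j * qfact j * qq ^ j * PP (Suc j) n) = qint 2 ^ n * qfact n"
proof -
  have "(\<Sum>j\<le>n. of_nat (n choose j) * 2 ^ j * qfact j * qq ^ j * PP (Suc j) n) * (1 - qq) ^ n
     = (\<Sum>j\<le>n. of_nat (n choose j) * (2 * qq) ^ j * (1 - qq) ^ (n - j)) * PP 1 n"
    unfolding sum_distrib_right
  proof (intro sum.cong refl)
    fix j assume j: "j \<in> {..n}"
    have e1: "(1 - qq) ^ n = (1 - qq) ^ j * (1 - qq) ^ (n - j)"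
      using j by (simp add: power_add[symmetric])
    have e2: "qfact j * (1 - qq) ^ j * PP (Suc j) n = PP 1 n"
      using j qfact_mult[of j] PP_split[of j n] by simp
    have e3: "(2 * qq) ^ j = 2 ^ j * qq ^ j" by (rule power_mult_distrib)
    have "of_nat (n choose j) * 2 ^ j * qfact j * qq ^ j * PP (Suc j) n * (1 - qq) ^ n
       = of_nat (n choose j) * (2 ^ j * qq ^ j) * (1 - qq) ^ (n - j) * (qfact j * (1 - qq) ^ j * PP (Suc j) n)"
      unfolding e1 by (simp only: mult_ac)
    then show "of_nat (n choose j) * 2 ^ j * qfact j * qq ^ j * PP (Suc j) n * (1 - qq) ^ n
       = of_nat (n choose j) * (2 * qq) ^ j * (1 - qq) ^ (n - j) * PP 1 n"
      unfolding e2 e3 .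
  qed
  also have "(\<Sum>j\<le>n. of_nat (n choose j) * (2 * qq) ^ j * (1 - qq) ^ (n - j)) = (1 + qq) ^ n"
  proof -
    have e: "2 * qq + (1 - qq) = 1 + qq" by (simp add: algebra_simps)
    have "(1 + qq) ^ n = (2 * qq + (1 - qq)) ^ n" unfolding e ..
    also have "\<dots> = (\<Sum>j\<le>n. of_nat (n choose j) * (2 * qq) ^ j * (1 - qq) ^ (n - j))"
      by (rule binomial_ring)
    finally show ?thesis by (rule sym)
  qed
  also have "(1 + qq) ^ n * PP 1 n = qint 2 ^ n * qfact n * (1 - qq) ^ n"
  proof -
    have h: "qint 2 = 1 + qq" by (simp add: qint_def numeral_2_eq_2 monom_0 one_pCons)
    have "(1 + qq) ^ n * PP 1 n = (1 + qq) ^ n * (qfact n * (1 - qq) ^ n)" by (simp only: qfact_mult)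
    then show ?thesis by (simp only: h mult.assoc)
  qed
  finally show ?thesis by (rule cancel_q)
qed



lemma sum_Pow_split:
  fixes g :: "nat set \<Rightarrow> 'a::comm_monoid_add" and n :: nat
  shows "(\<Sum>S\<in>Pow {1..n}. g S) = g {} + (\<Sum>j\<in>{1..n}. \<Sum>T\<in>Pow {1..j-1}. g (insert j T))"
proof (induction n)
  case 0 then show ?case by simp
next
  case (Suc n)
  have P: "Pow {1..Suc n} = Pow {1..n} \<union> insert (Suc n) ` Pow {1..n}"
    by (simp add: atLeastAtMostSuc_conv Pow_insert)
  have disj: "Pow {1..n} \<inter> insert (Suc n) ` Pow {1..n} = {}" by auto
  have inj: "inj_on (insert (Suc n)) (Pow {1..n})"
  proof (rule inj_onI)
    fix x y assume x: "x \<in> Pow {1..n}" and y: "y \<in> Pow {1..n}" and e: "insert (Suc n) x = insert (Suc n) y"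
    have "Suc n \<notin> x" "Suc n \<notin> y" using x y by auto
    then show "x = y" using e by (metis Diff_insert_absorb)
  qed
  have "(\<Sum>S\<in>Pow {1..Suc n}. g S) = (\<Sum>S\<in>Pow {1..n}. g S) + (\<Sum>T\<in>Pow {1..n}. g (insert (Suc n) T))"
    unfolding P sum.union_disjoint[OF finite_Pow_iff[THEN iffD2, OF finite_atLeastAtMost] finite_imageI[OF finite_Pow_iff[THEN iffD2, OF finite_atLeastAtMost]] disj]
    unfolding sum.reindex[OF inj] comp_def ..
  also have "\<dots> = g {} + (\<Sum>j\<in>{1..Suc n}. \<Sum>T\<in>Pow {1..j-1}. g (insert j T))"
    using Suc by (simp add: add.assoc)
  finally show ?case .
qed

lemma W_alt: "W n S = (\<Prod>i\<in>{1..n}. if i \<in> S then qq ^ i else 1 - qq ^ i)"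
  unfolding W_def
proof (intro prod.cong refl)
  fix i show "(if i \<in> S then monom 1 i else 1 - monom 1 i) = (if i \<in> S then qq ^ i else 1 - qq ^ i)"
    using monom_q[of i] by simp
qed

lemma W_empty: "W n {} = PP 1 n"
  unfolding W_alt PP_def by simp

lemma W_insert:
  assumes j: "1 \<le> j" "j \<le> n" and T: "T \<subseteq> {1..j-1}"
  shows "W n (insert j T) = W (j - 1) T * qq ^ j * PP (Suc j) n"
proof -
  have split: "{1..n} = {1..j-1} \<union> ({j} \<union> {Suc j..n})" using j by auto
  have d1: "{1..j-1} \<inter> ({j} \<union> {Suc j..n}) = {}" using j by auto
  let ?f = "\<lambda>i. if i \<in> insert j T then qq ^ i else 1 - qq ^ i :: int poly"
  have a: "prod ?f {1..n} = prod ?f {1..j-1} * prod ?f ({j} \<union> {Suc j..n})"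
    by (subst split, rule prod.union_disjoint) (use d1 in auto)
  have b: "prod ?f ({j} \<union> {Suc j..n}) = ?f j * prod ?f {Suc j..n}"
    by simp
  have "W n (insert j T) = prod ?f {1..j-1} * (?f j * prod ?f {Suc j..n})"
    unfolding W_alt a b ..
  moreover have "prod ?f {1..j-1} = W (j - 1) T"
    unfolding W_alt using j by (intro prod.cong refl) auto
  moreover have "?f j = qq ^ j" by simp
  moreover have "prod ?f {Suc j..n} = PP (Suc j) n"
    unfolding PP_def using T by (intro prod.cong refl) auto
  ultimately show ?thesis by (simp add: mult.assoc)
qed

lemma fc_step:
  assumes finQ: "finite Q" and down: "\<And>y z. y \<in> Q \<Longrightarrow> z \<subseteq> y \<Longrightarrow> z \<in> Q"
    and finy: "\<And>y. y \<in> Q \<Longrightarrow> finite y"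
    and T: "T \<subseteq> {1..j-1}" and j: "1 \<le> j"
  shows "flag_count Q card (insert j T) = (\<Sum>y\<in>{y\<in>Q. card y = j}. flag_count (Pow y) card T)"
proof -
  have finT: "finite T" using T finite_subset by blast
  have lt: "\<forall>t\<in>T. t < j"
  proof
    fix t assume "t \<in> T"
    then have "t \<le> j - 1" using T by auto
    then show "t < j" using j by arith
  qed
  have "flag_count Q card (insert j T) = (\<Sum>y\<in>{y\<in>Q. card y = j}. flag_count {z\<in>Q. z \<subset> y} card T)"
    by (rule flag_count_insert_max[OF finQ finT lt])
  also have "\<dots> = (\<Sum>y\<in>{y\<in>Q. card y = j}. flag_count (Pow y) card T)"
  proof (intro sum.cong refl)
    fix y assume y: "y \<in> {y\<in>Q. card y = j}"
    have "{p\<in>{z\<in>Q. z \<subset> y}. card p \<in> T} = {p\<in>Pow y. card p \<in> T}"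
    proof
      show "{p\<in>{z\<in>Q. z \<subset> y}. card p \<in> T} \<subseteq> {p\<in>Pow y. card p \<in> T}" by auto
      show "{p\<in>Pow y. card p \<in> T} \<subseteq> {p\<in>{z\<in>Q. z \<subset> y}. card p \<in> T}"
      proof
        fix p assume p: "p \<in> {p\<in>Pow y. card p \<in> T}"
        then have "p \<noteq> y" using y lt by auto
        then show "p \<in> {p\<in>{z\<in>Q. z \<subset> y}. card p \<in> T}" using p y down by auto
      qed
    qed
    then show "flag_count {z\<in>Q. z \<subset> y} card T = flag_count (Pow y) card T"
      using flag_count_restrict[OF finT, of "{z\<in>Q. z \<subset> y}" card]
        flag_count_restrict[OF finT, of "Pow y" card] by simp
  qed
  finally show ?thesis .
qed

lemma simplex_sum:
  "finite x \<Longrightarrow> card x = k \<Longrightarrow> 1 \<le> k \<Longrightarrow>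
   (\<Sum>T\<in>Pow {1..k-1}. of_nat (flag_count (Pow x) card T) * W (k-1) T) = qfact k"
proof (induction k arbitrary: x rule: less_induct)
  case (less k)
  have finQ: "finite (Pow x)" using less.prems by simp
  have down: "\<And>y z. y \<in> Pow x \<Longrightarrow> z \<subseteq> y \<Longrightarrow> z \<in> Pow x" by auto
  have finy: "\<And>y. y \<in> Pow x \<Longrightarrow> finite y" using less.prems finite_subset by auto
  define M where "M j = qq ^ j * PP (Suc j) (k - 1)" for j
  have inner: "(\<Sum>T\<in>Pow {1..j-1}. of_nat (flag_count (Pow x) card (insert j T)) * W (k-1) (insert j T))
      = of_nat (k choose j) * qfact j * M j" if j: "j \<in> {1..k-1}" for j
  proof -
    have "(\<Sum>T\<in>Pow {1..j-1}. of_nat (flag_count (Pow x) card (insert j T)) * W (k-1) (insert j T))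
       = (\<Sum>T\<in>Pow {1..j-1}. \<Sum>y\<in>{y\<in>Pow x. card y = j}. of_nat (flag_count (Pow y) card T) * W (j-1) T * M j)"
    proof (intro sum.cong refl)
      fix T assume T: "T \<in> Pow {1..j-1}"
      have "W (k-1) (insert j T) = W (j-1) T * M j"
        using W_insert[of j "k-1" T] j T unfolding M_def by (auto simp: mult.assoc)
      then show "of_nat (flag_count (Pow x) card (insert j T)) * W (k-1) (insert j T)
          = (\<Sum>y\<in>{y\<in>Pow x. card y = j}. of_nat (flag_count (Pow y) card T) * W (j-1) T * M j)"
        using fc_step[OF finQ down finy, where T=T and j=j] T j
        by (simp add: sum_distrib_right mult.assoc)
    qed
    also have "\<dots> = (\<Sum>y\<in>{y\<in>Pow x. card y = j}. (\<Sum>T\<in>Pow {1..j-1}. of_nat (flag_count (Pow y) card T) * W (j-1) T) * M j)"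
      by (subst sum.swap) (simp add: sum_distrib_right)
    also have "\<dots> = (\<Sum>y\<in>{y\<in>Pow x. card y = j}. qfact j * M j)"
    proof (intro sum.cong refl)
      fix y assume y: "y \<in> {y\<in>Pow x. card y = j}"
      have "j < k" "1 \<le> j" "finite y" using j y less.prems finite_subset by auto
      then show "(\<Sum>T\<in>Pow {1..j-1}. of_nat (flag_count (Pow y) card T) * W (j-1) T) * M j = qfact j * M j"
        using less.IH[of j y] y by simp
    qed
    also have "\<dots> = of_nat (card {y\<in>Pow x. card y = j}) * qfact j * M j" by simp
    also have "card {y\<in>Pow x. card y = j} = k choose j"
    proof -
      have "{y\<in>Pow x. card y = j} = {A. A \<subseteq> x \<and> card A = j}" by auto
      then show ?thesis using n_subsets[of x j] less.prems by simp
    qed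
    finally show ?thesis .
  qed
  have "(\<Sum>T\<in>Pow {1..k-1}. of_nat (flag_count (Pow x) card T) * W (k-1) T)
     = PP 1 (k - 1) + (\<Sum>j\<in>{1..k-1}. of_nat (k choose j) * qfact j * M j)"
    unfolding sum_Pow_split[of _ "k-1"] using inner
    by (simp add: flag_count_empty W_empty)
  also have "\<dots> = (\<Sum>j<k. of_nat (k choose j) * qfact j * qq ^ j * PP (Suc j) (k - 1))"
  proof -
    have "{..<k} = insert 0 {1..k-1}" using less.prems by auto
    then show ?thesis by (simp add: M_def qfact_def mult.assoc)
  qed
  also have "\<dots> = qfact k" by (rule simplex_identity) (use less.prems in simp)
  finally show ?case .
qed

lemma cross_sum:
  assumes finQ: "finite Q" and down: "\<And>y z. y \<in> Q \<Longrightarrow> z \<subseteq> y \<Longrightarrow> z \<in> Q"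
    and finy: "\<And>y. y \<in> Q \<Longrightarrow> finite y"
    and cnt: "\<And>j. 1 \<le> j \<Longrightarrow> j \<le> n \<Longrightarrow> card {y\<in>Q. card y = j} = (n choose j) * 2 ^ j"
  shows "(\<Sum>T\<in>Pow {1..n}. of_nat (flag_count Q card T) * W n T) = qint 2 ^ n * qfact n"
proof -
  define M where "M j = qq ^ j * PP (Suc j) n" for j
  have inner: "(\<Sum>T\<in>Pow {1..j-1}. of_nat (flag_count Q card (insert j T)) * W n (insert j T))
      = of_nat (n choose j) * 2 ^ j * qfact j * M j" if j: "j \<in> {1..n}" for j
  proof -
    have "(\<Sum>T\<in>Pow {1..j-1}. of_nat (flag_count Q card (insert j T)) * W n (insert j T))
       = (\<Sum>T\<in>Pow {1..j-1}. \<Sum>y\<in>{y\<in>Q. card y = j}. of_nat (flag_count (Pow y) card T) * W (j-1) T * M j)"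
    proof (intro sum.cong refl)
      fix T assume T: "T \<in> Pow {1..j-1}"
      have "W n (insert j T) = W (j-1) T * M j"
        using W_insert[of j n T] j T unfolding M_def by (auto simp: mult.assoc)
      then show "of_nat (flag_count Q card (insert j T)) * W n (insert j T)
          = (\<Sum>y\<in>{y\<in>Q. card y = j}. of_nat (flag_count (Pow y) card T) * W (j-1) T * M j)"
        using fc_step[OF finQ down finy, where T=T and j=j] T j
        by (simp add: sum_distrib_right mult.assoc)
    qed
    also have "\<dots> = (\<Sum>y\<in>{y\<in>Q. card y = j}. (\<Sum>T\<in>Pow {1..j-1}. of_nat (flag_count (Pow y) card T) * W (j-1) T) * M j)"
      by (subst sum.swap) (simp add: sum_distrib_right)
    also have "\<dots> = (\<Sum>y\<in>{y\<in>Q. card y = j}. qfact j * M j)"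
    proof (intro sum.cong refl)
      fix y assume y: "y \<in> {y\<in>Q. card y = j}"
      have "1 \<le> j" "finite y" using j y finy by auto
      then show "(\<Sum>T\<in>Pow {1..j-1}. of_nat (flag_count (Pow y) card T) * W (j-1) T) * M j = qfact j * M j"
        using simplex_sum[of y j] y by simp
    qed
    also have "\<dots> = of_nat (card {y\<in>Q. card y = j}) * qfact j * M j" by simp
    also have "\<dots> = of_nat (n choose j) * 2 ^ j * qfact j * M j" using cnt[of j] j by simp
    finally show ?thesis .
  qed
  have "(\<Sum>T\<in>Pow {1..n}. of_nat (flag_count Q card T) * W n T)
     = PP 1 n + (\<Sum>j\<in>{1..n}. of_nat (n choose j) * 2 ^ j * qfact j * M j)"
    unfolding sum_Pow_split[of _ n] using inner
    by (simp add: flag_count_empty W_empty)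
  also have "\<dots> = (\<Sum>j\<le>n. of_nat (n choose j) * 2 ^ j * qfact j * qq ^ j * PP (Suc j) n)"
  proof -
    have "{..n} = insert 0 {1..n}" by auto
    then show ?thesis by (simp add: M_def qfact_def mult.assoc)
  qed
  also have "\<dots> = qint 2 ^ n * qfact n" by (rule cross_identity)
  finally show ?thesis .
qed



definition Vs :: "(real ^ 'n) set" where
  "Vs = insert 0 (range (\<lambda>i. axis i 1))"

lemma axes_indep: "\<not> affine_dependent (insert (0::real^'n) (range (\<lambda>i. axis i 1)))"
proof -
  have "0 \<notin> range (\<lambda>i. axis i (1::real) :: real^'n)" by auto
  moreover have "independent (range (\<lambda>i. axis i (1::real) :: real^'n))"
  proof (rule pairwise_orthogonal_independent)
    show "pairwise orthogonal (range (\<lambda>i. axis i (1::real) :: real^'n))"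
      unfolding pairwise_def orthogonal_def by (auto simp: inner_axis_axis)
    show "0 \<notin> range (\<lambda>i. axis i (1::real) :: real^'n)" by auto
  qed
  ultimately show ?thesis by (simp add: affine_dependent_iff_dependent)
qed

lemma Vs_indep: "\<not> affine_dependent (Vs :: (real^'n) set)"
  unfolding Vs_def by (rule axes_indep)

lemma finite_Vs: "finite (Vs :: (real^'n) set)"
  unfolding Vs_def by simp

lemma card_Vs: "card (Vs :: (real^'n) set) = CARD('n) + 1"
proof -
  have inj: "inj (\<lambda>i::'n. axis i (1::real))" by (rule injI) (simp add: axis_eq_axis)
  have "0 \<notin> range (\<lambda>i::'n. axis i (1::real))" by auto
  then show ?thesis unfolding Vs_def using card_image[OF inj] by simp
qed

lemma face_rank_hull_indep:
  fixes c :: "'a::euclidean_space set"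
  assumes "\<not> affine_dependent c"
  shows "face_rank (convex hull c) = card c"
proof -
  have "int (card c) = aff_dim c + 1" using aff_dim_affine_independent[OF assms] by simp
  then show ?thesis unfolding face_rank_def aff_dim_convex_hull by simp
qed

lemma hull_subset_indep:
  fixes S :: "'a::euclidean_space set"
  assumes ind: "\<not> affine_dependent S" and c: "c \<subseteq> S" and d: "d \<subseteq> S"
  shows "convex hull c \<subseteq> convex hull d \<longleftrightarrow> c \<subseteq> d"
proof
  assume h: "convex hull c \<subseteq> convex hull d"
  show "c \<subseteq> d"
  proof
    fix x assume x: "x \<in> c"
    show "x \<in> d"
    proof (rule ccontr)
      assume xd: "x \<notin> d"
      have "x \<in> convex hull c" using x by (rule hull_inc)
      then have "x \<in> convex hull d" using h by (rule subsetD[rotated])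
      then have "x \<in> affine hull d" using convex_hull_subset_affine_hull by (rule subsetD[rotated])
      moreover have "insert x d - {x} = d" using xd by auto
      ultimately have "x \<in> affine hull (insert x d - {x})" by simp
      then have dep: "affine_dependent (insert x d)" unfolding affine_dependent_def by blast
      have "insert x d \<subseteq> S" using x c d by auto
      from affine_dependent_subset[OF dep this] ind show False by simp
    qed
  qed
next
  assume "c \<subseteq> d" then show "convex hull c \<subseteq> convex hull d" by (rule hull_mono)
qed

lemma simplex_is_hull: "(simplex_poly :: (real^'n) set) = convex hull Vs"
  unfolding simplex_poly_def Vs_def ..

lemma aff_dim_simplex: "aff_dim (simplex_poly :: (real^'n) set) = int CARD('n)"
proof -
  have "int (card (Vs :: (real^'n) set)) = aff_dim (Vs :: (real^'n) set) + 1"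
    using aff_dim_affine_independent[OF Vs_indep] by simp
  then show ?thesis unfolding simplex_is_hull aff_dim_convex_hull card_Vs by simp
qed

lemma simplex_part:
  "Theta (Psi (simplex_poly :: (real ^ 'n) set)) = qfact (CARD('n) + 1)"
proof -
  let ?n = "CARD('n)"
  let ?P = "simplex_poly :: (real ^ 'n) set"
  have "Theta (Psi ?P) = (\<Sum>S\<in>Pow {1..?n}. of_nat (flag_count (face_lattice ?P) face_rank S) * W ?n S)"
    unfolding Psi_def aff_dim_simplex by (simp add: Theta_ab_index)
  also have "\<dots> = (\<Sum>S\<in>Pow {1..?n}. of_nat (flag_count (Pow (Vs :: (real^'n) set)) card S) * W ?n S)"
  proof (intro sum.cong refl)
    fix S assume S: "S \<in> Pow {1..?n}"
    have finS: "finite S" using S finite_subset by blast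
    have "flag_count (face_lattice ?P) face_rank S = flag_count (Pow (Vs :: (real^'n) set)) card S"
    proof (rule flag_count_transfer[where f = "\<lambda>c. convex hull c"])
      fix x assume x: "x \<in> Pow (Vs :: (real^'n) set)"
      then have ind: "\<not> affine_dependent x" using Vs_indep affine_dependent_subset by blast
      show "convex hull x \<in> face_lattice ?P \<and> face_rank (convex hull x) = card x"
        using x face_of_convex_hull_affine_independent[OF Vs_indep] face_rank_hull_indep[OF ind]
        unfolding face_lattice_def simplex_is_hull by auto
    next
      fix y assume y: "y \<in> face_lattice ?P"
      then have "y face_of convex hull (Vs :: (real^'n) set)" unfolding face_lattice_def simplex_is_hull by simp
      then obtain c where "c \<subseteq> (Vs :: (real^'n) set)" "y = convex hull c"
        using face_of_convex_hull_affine_independent[OF Vs_indep, of y] by blast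
      then show "y \<in> (\<lambda>c. convex hull c) ` Pow (Vs :: (real^'n) set)" by (intro image_eqI[of _ _ c]) auto
    next
      fix c d assume "c \<in> Pow (Vs :: (real^'n) set)" "d \<in> Pow (Vs :: (real^'n) set)"
      then have "c \<subseteq> (Vs :: (real^'n) set)" "d \<subseteq> (Vs :: (real^'n) set)" by auto
      then show "convex hull c \<subseteq> convex hull d \<longleftrightarrow> c \<subseteq> d"
        by (rule hull_subset_indep[OF Vs_indep])
    qed (rule finS)
    then show "of_nat (flag_count (face_lattice ?P) face_rank S) * W ?n S
        = of_nat (flag_count (Pow (Vs :: (real^'n) set)) card S) * W ?n S" by simp
  qed
  also have "\<dots> = qfact (?n + 1)"
    using simplex_sum[of "Vs :: (real^'n) set" "?n + 1"] finite_Vs card_Vs by simp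
  finally show ?thesis .
qed



definition Vc :: "(real ^ 'n) set" where
  "Vc = range (\<lambda>i. axis i 1) \<union> range (\<lambda>i. axis i (-1))"

definition AF :: "(real ^ 'n) set set" where
  "AF = {d. d \<subseteq> Vc \<and> (\<forall>i. \<not> (axis i 1 \<in> d \<and> axis i (-1) \<in> d))}"

definition hvec :: "(real ^ 'n) set \<Rightarrow> real ^ 'n" where
  "hvec d = (\<chi> i. if axis i 1 \<in> d then 1 else if axis i (-1) \<in> d then -1 else 0)"

lemma cross_is_hull: "(cross_polytope :: (real^'n) set) = convex hull Vc"
  unfolding cross_polytope_def Vc_def ..

lemma finite_Vc: "finite (Vc :: (real^'n) set)"
  unfolding Vc_def by simp

lemma finite_AF: "finite (AF :: (real^'n) set set)"
proof -
  have "AF \<subseteq> Pow (Vc :: (real^'n) set)" unfolding AF_def by auto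
  then show ?thesis using finite_Vc finite_subset by (metis finite_Pow_iff)
qed

lemma AF_down: "y \<in> AF \<Longrightarrow> z \<subseteq> y \<Longrightarrow> z \<in> AF"
  unfolding AF_def by auto

lemma AF_fin: "y \<in> (AF :: (real^'n) set set) \<Longrightarrow> finite y"
  unfolding AF_def using finite_Vc finite_subset by auto

lemma Vc_cases:
  assumes "v \<in> Vc"
  obtains i where "v = axis i 1" | i where "v = axis i (-1)"
  using assms unfolding Vc_def by auto

lemma Vc_iff: "v \<in> Vc \<longleftrightarrow> (\<exists>i. v = axis i 1 \<or> v = axis i (-1))"
  unfolding Vc_def by auto

lemma Vc_ex: "v \<in> Vc \<Longrightarrow> \<exists>i a. v = axis i a \<and> (a = 1 \<or> a = -1)"
  unfolding Vc_iff by blast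

lemma AF_indep:
  fixes d :: "(real^'n) set"
  assumes d: "d \<in> AF"
  shows "\<not> affine_dependent d"
proof -
  have dV: "d \<subseteq> Vc" and na: "\<And>i. \<not> (axis i 1 \<in> d \<and> axis i (-1) \<in> d)"
    using d unfolding AF_def by auto
  have "independent d"
  proof (rule pairwise_orthogonal_independent)
    show "pairwise orthogonal d"
      unfolding pairwise_def orthogonal_def
    proof (intro ballI impI)
      fix u v assume u: "u \<in> d" and v: "v \<in> d" and uv: "u \<noteq> v"
      from dV u have "u \<in> Vc" by blast
      then obtain i a where ua: "u = axis i a" "a = 1 \<or> a = -1" using Vc_ex by blast
      from dV v have "v \<in> Vc" by blast
      then obtain j b where vb: "v = axis j b" "b = 1 \<or> b = -1" using Vc_ex by blast
      show "u \<bullet> v = 0"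
      proof (cases "i = j")
        case True
        then have "a \<noteq> b" using uv ua vb by auto
        then have "axis i 1 \<in> d \<and> axis i (-1) \<in> d" using ua vb u v True by auto
        then show ?thesis using na by blast
      next
        case False then show ?thesis using ua vb by (simp add: inner_axis_axis)
      qed
    qed
    show "0 \<notin> d"
    proof
      assume "0 \<in> d"
      then have "(0::real^'n) \<in> Vc" using dV by blast
      then obtain i a where "(0::real^'n) = axis i a" "a = 1 \<or> a = -1" using Vc_ex by blast
      then show False by auto
    qed
  qed
  then show ?thesis using affine_dependent_imp_dependent by blast
qed

lemma hv_axis1: "hvec d \<bullet> axis i 1 = (if axis i 1 \<in> d then 1 else if axis i (-1) \<in> d then -1 else 0)"
  by (simp add: hvec_def inner_axis)

lemma hv_axis2: "hvec d \<bullet> axis i (-1) = (if axis i 1 \<in> d then -1 else if axis i (-1) \<in> d then 1 else 0)"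
  by (simp add: hvec_def inner_axis)

lemma hv_le:
  fixes v :: "real^'n"
  assumes "v \<in> Vc" shows "hvec d \<bullet> v \<le> 1"
proof -
  from assms obtain i where "v = axis i 1 \<or> v = axis i (-1)" unfolding Vc_iff by blast
  then show ?thesis
  proof
    assume "v = axis i 1" then show ?thesis by (simp add: hv_axis1)
  next
    assume "v = axis i (-1)" then show ?thesis by (simp add: hv_axis2)
  qed
qed

lemma hv_eq:
  fixes v :: "real^'n"
  assumes d: "d \<in> AF" and v: "v \<in> Vc" shows "hvec d \<bullet> v = 1 \<longleftrightarrow> v \<in> d"
proof -
  from v obtain i where vi: "v = axis i 1 \<or> v = axis i (-1)" unfolding Vc_iff by blast
  have na: "\<not> (axis i 1 \<in> d \<and> axis i (-1) \<in> d)" using d unfolding AF_def by blast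
  from vi show ?thesis
  proof
    assume "v = axis i 1" then show ?thesis by (simp add: hv_axis1)
  next
    assume "v = axis i (-1)" then show ?thesis using na by (simp add: hv_axis2)
  qed
qed

lemma hull_AF:
  fixes d :: "(real^'n) set"
  assumes d: "d \<in> AF"
  shows "convex hull d = convex hull Vc \<inter> {x. hvec d \<bullet> x = 1}"
proof
  have dV: "d \<subseteq> Vc" using d unfolding AF_def by auto
  show "convex hull d \<subseteq> convex hull Vc \<inter> {x. hvec d \<bullet> x = 1}"
  proof (rule Int_greatest)
    show "convex hull d \<subseteq> convex hull Vc" using dV by (rule hull_mono)
    show "convex hull d \<subseteq> {x. hvec d \<bullet> x = 1}"
    proof (rule hull_minimal)
      show "d \<subseteq> {x. hvec d \<bullet> x = 1}" using hv_eq[OF d] dV by auto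
      show "convex {x. hvec d \<bullet> x = 1}" by (rule convex_hyperplane)
    qed
  qed
next
  have dV: "d \<subseteq> Vc" using d unfolding AF_def by auto
  have finD: "finite d" using AF_fin[OF d] .
  show "convex hull Vc \<inter> {x. hvec d \<bullet> x = 1} \<subseteq> convex hull d"
  proof
    fix x :: "real^'n" assume x: "x \<in> convex hull Vc \<inter> {x. hvec d \<bullet> x = 1}"
    then obtain u where u0: "\<forall>v\<in>Vc. 0 \<le> u v" and u1: "sum u Vc = 1"
      and ux: "(\<Sum>v\<in>Vc. u v *\<^sub>R v) = x"
      using convex_hull_finite[OF finite_Vc] by auto
    have hx: "hvec d \<bullet> x = 1" using x by simp
    have "hvec d \<bullet> x = (\<Sum>v\<in>Vc. u v * (hvec d \<bullet> v))"
      unfolding ux[symmetric] by (simp add: inner_sum_right)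
    then have "(\<Sum>v\<in>Vc. u v * (1 - hvec d \<bullet> v)) = 0"
      using hx u1 by (simp add: right_diff_distrib sum_subtractf)
    moreover have "\<And>v. v \<in> Vc \<Longrightarrow> 0 \<le> u v * (1 - hvec d \<bullet> v)"
    proof -
      fix v :: "real^'n" assume v: "v \<in> Vc"
      have a: "0 \<le> u v" using u0 v by blast
      have b: "0 \<le> 1 - hvec d \<bullet> v" using hv_le[OF v, of d] by simp
      show "0 \<le> u v * (1 - hvec d \<bullet> v)" using a b by (rule mult_nonneg_nonneg)
    qed
    ultimately have z: "\<forall>v\<in>Vc. u v * (1 - hvec d \<bullet> v) = 0"
      using sum_nonneg_eq_0_iff[OF finite_Vc, of "\<lambda>v. u v * (1 - hvec d \<bullet> v)"] by simp
    have uz: "\<And>v. v \<in> Vc - d \<Longrightarrow> u v = 0"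
    proof -
      fix v :: "real^'n" assume v: "v \<in> Vc - d"
      then have "hvec d \<bullet> v \<noteq> 1" using hv_eq[OF d] by auto
      then have "1 - hvec d \<bullet> v \<noteq> 0" by simp
      then show "u v = 0" using z v by auto
    qed
    have s1: "sum u d = 1"
      using u1 sum.mono_neutral_right[OF finite_Vc dV, of u] uz by simp
    have s2: "(\<Sum>v\<in>d. u v *\<^sub>R v) = x"
      using ux sum.mono_neutral_right[OF finite_Vc dV, of "\<lambda>v. u v *\<^sub>R v"] uz by simp
    show "x \<in> convex hull d"
      unfolding convex_hull_finite[OF finD] using u0 dV s1 s2 by blast
  qed
qed

lemma face_AF:
  fixes d :: "(real^'n) set"
  shows "d \<in> AF \<Longrightarrow> convex hull d face_of convex hull Vc"
proof -
  assume d: "d \<in> AF"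
  have "\<And>x. x \<in> convex hull Vc \<Longrightarrow> hvec d \<bullet> x \<le> 1"
  proof -
    fix x :: "real^'n" assume "x \<in> convex hull Vc"
    moreover have "convex hull Vc \<subseteq> {x. hvec d \<bullet> x \<le> 1}"
      by (rule hull_minimal) (auto simp: hv_le convex_halfspace_le)
    ultimately show "hvec d \<bullet> x \<le> 1" by auto
  qed
  then have "(convex hull Vc \<inter> {x. hvec d \<bullet> x = 1}) face_of convex hull Vc"
    by (intro face_of_Int_supporting_hyperplane_le) auto
  then show ?thesis using hull_AF[OF d] by simp
qed

lemma hull_subset_AF:
  fixes c d :: "(real^'n) set"
  assumes c: "c \<in> AF" and d: "d \<in> AF"
  shows "convex hull c \<subseteq> convex hull d \<longleftrightarrow> c \<subseteq> d"
proof
  assume h: "convex hull c \<subseteq> convex hull d"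
  show "c \<subseteq> d"
  proof
    fix v :: "real^'n" assume v: "v \<in> c"
    have "v \<in> convex hull c" using v by (rule hull_inc)
    then have "v \<in> convex hull d" using h by (rule subsetD[rotated])
    then have "hvec d \<bullet> v = 1" using hull_AF[OF d] by auto
    moreover have "v \<in> Vc" using c v unfolding AF_def by auto
    ultimately show "v \<in> d" using hv_eq[OF d] by simp
  qed
next
  assume "c \<subseteq> d" then show "convex hull c \<subseteq> convex hull d" by (rule hull_mono)
qed

lemma midpoint_axis: "midpoint (axis j 1) (axis j (-1)) = (0::real^'n)"
  by (simp add: midpoint_def vec_eq_iff axis_def)

lemma faces_cross:
  assumes F: "F face_of convex hull (Vc :: (real^'n) set)"
  shows "F = convex hull Vc \<or> (\<exists>d\<in>AF. F = convex hull d)"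
proof -
  obtain c where cV: "c \<subseteq> Vc" and Fc: "F = convex hull c"
    using face_of_convex_hull_subset[OF finite_imp_compact[OF finite_Vc] F] by blast
  show ?thesis
  proof (cases "c \<in> AF")
    case True then show ?thesis using Fc by blast
  next
    case False
    then obtain i where i: "axis i 1 \<in> c" "axis i (-1) \<in> c" using cV unfolding AF_def by auto
    have "midpoint (axis i 1) (axis i (-1)) \<in> convex hull {axis i 1, axis i (-1)}"
      using midpoint_in_closed_segment[of "axis i 1" "axis i (-1)"] unfolding segment_convex_hull .
    moreover have "convex hull {axis i 1, axis i (-1)} \<subseteq> convex hull c"
      using i by (intro hull_mono) auto
    ultimately have "midpoint (axis i 1) (axis i (-1)) \<in> F" using Fc by blast
    then have "(0::real^'n) \<in> F" by (simp only: midpoint_axis)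
    have VF: "Vc \<subseteq> F"
    proof
      fix v :: "real^'n" assume v: "v \<in> Vc"
      obtain j where vj: "v = axis j 1 \<or> v = axis j (-1)" using v unfolding Vc_iff by blast
      have ne: "axis j 1 \<noteq> (axis j (-1) :: real^'n)" by (simp add: axis_eq_axis)
      have "midpoint (axis j 1) (axis j (-1)) \<in> open_segment (axis j 1) (axis j (-1) :: real^'n)"
        using ne by simp
      then have "(0::real^'n) \<in> open_segment (axis j 1) (axis j (-1))" by (simp only: midpoint_axis)
      moreover have "axis j 1 \<in> convex hull Vc" "axis j (-1) \<in> convex hull Vc"
        by (auto intro!: hull_inc simp: Vc_def)
      ultimately have "axis j 1 \<in> F \<and> axis j (-1) \<in> F"
        using F \<open>0 \<in> F\<close> unfolding face_of_def by blast
      then show "v \<in> F" using vj by auto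
    qed
    have "convex hull Vc \<subseteq> F" using VF face_of_imp_convex[OF F] by (rule hull_minimal)
    then have "F = convex hull Vc" using face_of_imp_subset[OF F] by auto
    then show ?thesis by blast
  qed
qed

lemma aff_dim_cross: "aff_dim (convex hull (Vc :: (real^'n) set)) = int CARD('n)"
proof (rule antisym)
  show "aff_dim (convex hull (Vc :: (real^'n) set)) \<le> int CARD('n)"
    using aff_dim_le_DIM[of "convex hull (Vc :: (real^'n) set)"] by simp
  obtain i :: 'n where True by blast
  have "(0::real^'n) \<in> convex hull Vc"
  proof -
    have "midpoint (axis i 1) (axis i (-1)) \<in> convex hull {axis i 1, axis i (-1) :: real^'n}"
      using midpoint_in_closed_segment[of "axis i 1" "axis i (-1)"] unfolding segment_convex_hull .
    moreover have "convex hull {axis i 1, axis i (-1) :: real^'n} \<subseteq> convex hull Vc"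
      by (intro hull_mono) (auto simp: Vc_def)
    ultimately have "midpoint (axis i 1) (axis i (-1)) \<in> convex hull (Vc :: (real^'n) set)" by blast
    then show ?thesis by (simp only: midpoint_axis)
  qed
  then have "(Vs :: (real^'n) set) \<subseteq> convex hull Vc"
    unfolding Vs_def by (auto intro!: hull_inc simp: Vc_def)
  then have "aff_dim (Vs :: (real^'n) set) \<le> aff_dim (convex hull (Vc :: (real^'n) set))"
    by (rule aff_dim_subset)
  moreover have "aff_dim (Vs :: (real^'n) set) = int CARD('n)"
    using aff_dim_simplex unfolding simplex_is_hull aff_dim_convex_hull .
  ultimately show "int CARD('n) \<le> aff_dim (convex hull (Vc :: (real^'n) set))" by simp
qed



definition sg :: "bool \<Rightarrow> real" where "sg b = (if b then 1 else -1)"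

definition Phi :: "'n set \<times> ('n \<Rightarrow> bool) \<Rightarrow> (real ^ 'n) set" where
  "Phi p = (\<lambda>i. axis i (sg (snd p i))) ` fst p"

lemma axis_sg_eq: "(axis i (sg a) :: real^'n) = axis i' (sg b) \<longleftrightarrow> i = i' \<and> a = b"
  by (auto simp: axis_eq_axis sg_def)

lemma axis1_in_Phi: "(axis i 1 :: real^'n) \<in> Phi (I, \<sigma>) \<longleftrightarrow> i \<in> I \<and> \<sigma> i"
proof -
  have "(axis i 1 :: real^'n) = axis i (sg True)" by (simp add: sg_def)
  then show ?thesis unfolding Phi_def by (auto simp: axis_sg_eq)
qed

lemma axism_in_Phi: "(axis i (-1) :: real^'n) \<in> Phi (I, \<sigma>) \<longleftrightarrow> i \<in> I \<and> \<not> \<sigma> i"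
proof -
  have "(axis i (-1) :: real^'n) = axis i (sg False)" by (simp add: sg_def)
  then show ?thesis unfolding Phi_def by (auto simp: axis_sg_eq)
qed

lemma card_Phi: "card (Phi (I, \<sigma>) :: (real^'n) set) = card I"
proof -
  have "inj_on (\<lambda>i. axis i (sg (\<sigma> i)) :: real^'n) I"
    by (rule inj_onI) (simp add: axis_sg_eq)
  then show ?thesis unfolding Phi_def by (simp add: card_image)
qed

lemma Phi_AF: "(Phi (I, \<sigma>) :: (real^'n) set) \<in> AF"
proof -
  have "Phi (I, \<sigma>) \<subseteq> (Vc :: (real^'n) set)"
    unfolding Phi_def Vc_def sg_def by auto
  moreover have "\<forall>i. \<not> ((axis i 1 :: real^'n) \<in> Phi (I, \<sigma>) \<and> axis i (-1) \<in> Phi (I, \<sigma>))"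
    by (simp add: axis1_in_Phi axism_in_Phi)
  ultimately show ?thesis unfolding AF_def by blast
qed

definition Sig :: "nat \<Rightarrow> ('n set \<times> ('n \<Rightarrow> bool)) set" where
  "Sig j = Sigma {I. card I = j} (\<lambda>I. PiE I (\<lambda>_. UNIV :: bool set))"

lemma card_Sig: "card (Sig j :: ('n::finite set \<times> ('n \<Rightarrow> bool)) set) = (CARD('n) choose j) * 2 ^ j"
proof -
  have fin: "finite {I::'n set. card I = j}" by simp
  have "card (Sig j :: ('n set \<times> ('n \<Rightarrow> bool)) set) = (\<Sum>I\<in>{I::'n set. card I = j}. card (PiE I (\<lambda>_. UNIV :: bool set)))"
    unfolding Sig_def by (rule card_SigmaI[OF fin]) (auto intro: finite_PiE)
  also have "\<dots> = (\<Sum>I\<in>{I::'n set. card I = j}. 2 ^ j)"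
    by (intro sum.cong refl) (simp add: card_PiE)
  also have "\<dots> = card {I::'n set. card I = j} * 2 ^ j" by simp
  also have "card {I::'n set. card I = j} = CARD('n) choose j"
    using n_subsets[of "UNIV :: 'n set" j] by simp
  finally show ?thesis .
qed

lemma count_AF: "card {y \<in> (AF :: (real^'n) set set). card y = j} = (CARD('n) choose j) * 2 ^ j"
proof -
  have inj: "inj_on (Phi :: _ \<Rightarrow> (real^'n) set) (Sig j)"
  proof (rule inj_onI)
    fix p q assume p: "p \<in> Sig j" and q: "q \<in> Sig j" and e: "(Phi p :: (real^'n) set) = Phi q"
    obtain I \<sigma> where pI: "p = (I, \<sigma>)" by (cases p)
    obtain I' \<sigma>' where qI: "q = (I', \<sigma>')" by (cases q)
    have memI: "\<And>i. i \<in> I \<longleftrightarrow> (axis i 1 :: real^'n) \<in> Phi p \<or> axis i (-1) \<in> Phi p"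
      unfolding pI axis1_in_Phi axism_in_Phi by auto
    have memI': "\<And>i. i \<in> I' \<longleftrightarrow> (axis i 1 :: real^'n) \<in> Phi q \<or> axis i (-1) \<in> Phi q"
      unfolding qI axis1_in_Phi axism_in_Phi by auto
    have II: "I = I'" using memI memI' e by blast
    have "\<sigma> = \<sigma>'"
    proof (rule PiE_ext)
      show "\<sigma> \<in> PiE I (\<lambda>_. UNIV :: bool set)" using p pI unfolding Sig_def by auto
      show "\<sigma>' \<in> PiE I (\<lambda>_. UNIV :: bool set)" using q qI II unfolding Sig_def by auto
      fix i assume i: "i \<in> I"
      have "\<sigma> i \<longleftrightarrow> (axis i 1 :: real^'n) \<in> Phi p" unfolding pI axis1_in_Phi using i by simp
      moreover have "\<sigma>' i \<longleftrightarrow> (axis i 1 :: real^'n) \<in> Phi q" unfolding qI axis1_in_Phi using i II by simp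
      ultimately show "\<sigma> i = \<sigma>' i" using e by simp
    qed
    then show "p = q" using pI qI II by simp
  qed
  have img: "(Phi :: _ \<Rightarrow> (real^'n) set) ` Sig j = {y \<in> AF. card y = j}"
  proof
    show "(Phi :: _ \<Rightarrow> (real^'n) set) ` Sig j \<subseteq> {y \<in> AF. card y = j}"
    proof
      fix y assume "y \<in> (Phi :: _ \<Rightarrow> (real^'n) set) ` Sig j"
      then obtain I \<sigma> where "(I, \<sigma>) \<in> Sig j" "y = Phi (I, \<sigma>)" by auto
      then show "y \<in> {y \<in> AF. card y = j}" using Phi_AF card_Phi unfolding Sig_def by auto
    qed
  next
    show "{y \<in> AF. card y = j} \<subseteq> (Phi :: _ \<Rightarrow> (real^'n) set) ` Sig j"
    proof
      fix y :: "(real^'n) set" assume y: "y \<in> {y \<in> AF. card y = j}"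
      have yV: "y \<subseteq> Vc" and na: "\<And>i. \<not> (axis i 1 \<in> y \<and> axis i (-1) \<in> y)"
        using y unfolding AF_def by auto
      define I where "I = {i. axis i 1 \<in> y \<or> axis i (-1) \<in> y}"
      define \<sigma> where "\<sigma> = restrict (\<lambda>i. axis i 1 \<in> y) I"
      have eq: "Phi (I, \<sigma>) = y"
      proof
        show "Phi (I, \<sigma>) \<subseteq> y"
        proof
          fix v assume "v \<in> Phi (I, \<sigma>)"
          then obtain i where i: "i \<in> I" "v = axis i (sg (\<sigma> i))" unfolding Phi_def by auto
          show "v \<in> y"
          proof (cases "axis i 1 \<in> y")
            case True then show ?thesis using i by (simp add: \<sigma>_def sg_def)
          next
            case False then show ?thesis using i by (simp add: \<sigma>_def sg_def I_def)
          qed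
        qed
        show "y \<subseteq> Phi (I, \<sigma>)"
        proof
          fix v assume v: "v \<in> y"
          then have "v \<in> Vc" using yV by blast
          then obtain i where vi: "v = axis i 1 \<or> v = axis i (-1)" unfolding Vc_iff by blast
          then show "v \<in> Phi (I, \<sigma>)"
          proof
            assume "v = axis i 1"
            then show ?thesis using v by (simp add: axis1_in_Phi I_def \<sigma>_def)
          next
            assume a: "v = axis i (-1)"
            then have "axis i 1 \<notin> y" using na v by blast
            then show ?thesis using v a by (simp add: axism_in_Phi I_def \<sigma>_def)
          qed
        qed
      qed
      have "card I = j" using card_Phi[of I \<sigma>] eq y by simp
      moreover have "\<sigma> \<in> PiE I (\<lambda>_. UNIV :: bool set)" unfolding \<sigma>_def by simp
      ultimately have "(I, \<sigma>) \<in> Sig j" unfolding Sig_def by simp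
      then show "y \<in> (Phi :: _ \<Rightarrow> (real^'n) set) ` Sig j" using eq by (metis image_eqI)
    qed
  qed
  have "card {y \<in> (AF :: (real^'n) set set). card y = j} = card (Sig j :: ('n set \<times> ('n \<Rightarrow> bool)) set)"
    unfolding img[symmetric] using card_image[OF inj] .
  then show ?thesis using card_Sig by simp
qed

lemma cross_part:
  "Theta (Psi (cross_polytope :: (real ^ 'n) set)) = qint 2 ^ CARD('n) * qfact CARD('n)"
proof -
  let ?n = "CARD('n)"
  let ?P = "cross_polytope :: (real ^ 'n) set"
  have "Theta (Psi ?P) = (\<Sum>S\<in>Pow {1..?n}. of_nat (flag_count (face_lattice ?P) face_rank S) * W ?n S)"
    unfolding Psi_def cross_is_hull aff_dim_cross by (simp add: Theta_ab_index)
  also have "\<dots> = (\<Sum>S\<in>Pow {1..?n}. of_nat (flag_count (AF :: (real^'n) set set) card S) * W ?n S)"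
  proof (intro sum.cong refl)
    fix S assume S: "S \<in> Pow {1..?n}"
    have finS: "finite S" using S finite_subset by blast
    have "flag_count (face_lattice ?P) face_rank S = flag_count (AF :: (real^'n) set set) card S"
    proof (rule flag_count_transfer[where f = "\<lambda>c. convex hull c"])
      fix x :: "(real^'n) set" assume x: "x \<in> AF"
      show "convex hull x \<in> face_lattice ?P \<and> face_rank (convex hull x) = card x"
        using face_AF[OF x] face_rank_hull_indep[OF AF_indep[OF x]]
        unfolding face_lattice_def cross_is_hull by simp
    next
      fix y assume y: "y \<in> face_lattice ?P" and r: "face_rank y \<in> S"
      have F: "y face_of convex hull (Vc :: (real^'n) set)" using y unfolding face_lattice_def cross_is_hull by simp
      have "y \<noteq> convex hull Vc"
      proof
        assume "y = convex hull Vc"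
        then have "face_rank y = ?n + 1" unfolding face_rank_def by (simp add: aff_dim_cross)
        then show False using r S by auto
      qed
      then obtain d where "d \<in> AF" "y = convex hull d" using faces_cross[OF F] by blast
      then show "y \<in> (\<lambda>c. convex hull c) ` (AF :: (real^'n) set set)" by (intro image_eqI[of _ _ d]) auto
    next
      fix c d :: "(real^'n) set" assume "c \<in> AF" "d \<in> AF"
      then show "convex hull c \<subseteq> convex hull d \<longleftrightarrow> c \<subseteq> d" by (rule hull_subset_AF)
    qed (rule finS)
    then show "of_nat (flag_count (face_lattice ?P) face_rank S) * W ?n S
        = of_nat (flag_count (AF :: (real^'n) set set) card S) * W ?n S" by simp
  qed
  also have "\<dots> = qint 2 ^ ?n * qfact ?n"
  proof (rule cross_sum)
    show "finite (AF :: (real^'n) set set)" by (rule finite_AF)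
    show "\<And>y z. y \<in> (AF :: (real^'n) set set) \<Longrightarrow> z \<subseteq> y \<Longrightarrow> z \<in> AF" by (rule AF_down)
    show "\<And>y. y \<in> (AF :: (real^'n) set set) \<Longrightarrow> finite y" by (rule AF_fin)
    show "\<And>j. 1 \<le> j \<Longrightarrow> j \<le> ?n \<Longrightarrow> card {y \<in> (AF :: (real^'n) set set). card y = j} = (?n choose j) * 2 ^ j"
      by (rule count_AF)
  qed
  finally show ?thesis .
qed

theorem mainTheorem2:
  shows "Theta (Psi (simplex_poly :: (real ^ 'n) set)) = qfact (CARD('n) + 1) \<and>
         Theta (Psi (cross_polytope :: (real ^ 'n) set)) = qint 2 ^ CARD('n) * qfact CARD('n)"
  using simplex_part cross_part by blast


end
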